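(* Let $P$ be an integer. For integers $A,B$ consider the equation $\sigma_2(n)-n^2=An+B$ in positive integers $n$. Then every solution $n$ with $n>(|A|+|B|)^3$ has the following form (so all solutions not of this form are among the finitely many $n\le(|A|+|B|)^3$, which can be computed): (1) if $P^2+4$ is square-free, $A=P^2+2$ and $B=-P^4-4P^2+1$: $n=V_{2k}(P,-1)\,V_{2k+2}(P,-1)$ for some integer $k\ge 0$, with $V_{2k}(P,-1)$ and $V_{2k+2}(P,-1)$ both prime; (2) if $P^2+4$ is square-free, $A=P^2+2$ and $B=P^4+4P^2+1$: $n=V_{2k-1}(P,-1)\,V_{2k+1}(P,-1)$ for some integer $k\ge 1$, with $V_{2k-1}(P,-1)$ and $V_{2k+1}(P,-1)$ both prime; (3) if $P^2-4$ is square-free, $A=P^2-2$ and $B=-P^4+4P^2+1$: $n=V_{k-1}(P,1)\,V_{k+1}(P,1)$ for some integer $k\ge 1$, with $V_{k-1}(P,1)$ and $V_{k+1}(P,1)$ both prime.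
   Context: For a positive integer $n$ and $k\ge 0$, $\sigma_k(n)=\sum_{d\mid n,\ d>0} d^k$. For integers $P,Q$, the Lucas sequences are defined for $j\ge 0$ by $U_0(P,Q)=0$, $U_1(P,Q)=1$, $U_j(P,Q)=P\,U_{j-1}(P,Q)-Q\,U_{j-2}(P,Q)$ for $j>1$, and $V_0(P,Q)=2$, $V_1(P,Q)=P$, $V_j(P,Q)=P\,V_{j-1}(P,Q)-Q\,V_{j-2}(P,Q)$ for $j>1$. An integer is square-free if it is not divisible by the square of any prime (in particular it is nonzero). *)

theory Defs
  imports "HOL-Computational_Algebra.Computational_Algebra"
begin

definition sigma :: "nat \<Rightarrow> nat \<Rightarrow> nat" where
  "sigma k n = (\<Sum>d \<in> {d. d dvd n \<and> d > 0}. d ^ k)"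

fun lucasV :: "int \<Rightarrow> int \<Rightarrow> nat \<Rightarrow> int" where
  "lucasV P Q 0 = 2"
| "lucasV P Q (Suc 0) = P"
| "lucasV P Q (Suc (Suc j)) = P * lucasV P Q (Suc j) - Q * lucasV P Q j"

end

theory Submission
  imports Defs
begin


fun lucasU :: "int \<Rightarrow> int \<Rightarrow> nat \<Rightarrow> int" where
  "lucasU P Q 0 = 0"
| "lucasU P Q (Suc 0) = 1"
| "lucasU P Q (Suc (Suc j)) = P * lucasU P Q (Suc j) - Q * lucasU P Q j"

lemma luc_step:
  "2 * lucasV P Q (Suc n) = P * lucasV P Q n + (P^2 - 4*Q) * lucasU P Q n \<and>
   2 * lucasU P Q (Suc n) = P * lucasU P Q n + lucasV P Q n"
proof (induction n rule: nat_less_induct)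
  case (1 n)
  show ?case
  proof (cases n)
    case 0 then show ?thesis by (simp add: power2_eq_square)
  next
    case (Suc m)
    show ?thesis
    proof (cases m)
      case 0 then show ?thesis using Suc by (simp add: power2_eq_square algebra_simps)
    next
      case (Suc k)
      have h1: "2 * lucasV P Q (Suc k) = P * lucasV P Q k + (P^2 - 4*Q) * lucasU P Q k \<and>
   2 * lucasU P Q (Suc k) = P * lucasU P Q k + lucasV P Q k" using 1 Suc \<open>n = Suc m\<close> by auto
      have h2: "2 * lucasV P Q (Suc m) = P * lucasV P Q m + (P^2 - 4*Q) * lucasU P Q m \<and>
   2 * lucasU P Q (Suc m) = P * lucasU P Q m + lucasV P Q m" using 1 \<open>n = Suc m\<close> by auto
      have m1: "P * (2 * lucasV P Q (Suc m)) = P * (P * lucasV P Q m + (P^2 - 4*Q) * lucasU P Q m)"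
        "Q * (2 * lucasV P Q (Suc k)) = Q * (P * lucasV P Q k + (P^2 - 4*Q) * lucasU P Q k)"
        "P * (2 * lucasU P Q (Suc m)) = P * (P * lucasU P Q m + lucasV P Q m)"
        "Q * (2 * lucasU P Q (Suc k)) = Q * (P * lucasU P Q k + lucasV P Q k)"
        using h1 h2 by simp_all
      show ?thesis using m1 Suc \<open>n = Suc m\<close> by (simp add: algebra_simps)
    qed
  qed
qed

lemma luc_norm: "lucasV P Q n ^ 2 - (P^2 - 4*Q) * lucasU P Q n ^ 2 = 4 * Q ^ n"
proof (induction n)
  case 0 then show ?case by simp
next
  case (Suc n)
  obtain e1 e2 where e1: "2 * lucasV P Q (Suc n) = P * lucasV P Q n + (P^2 - 4*Q) * lucasU P Q n"
    and e2: "2 * lucasU P Q (Suc n) = P * lucasU P Q n + lucasV P Q n" using luc_step by blast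
  have "4 * (lucasV P Q (Suc n) ^ 2 - (P^2 - 4*Q) * lucasU P Q (Suc n) ^ 2)
      = (2*lucasV P Q (Suc n)) ^ 2 - (P^2 - 4*Q) * (2*lucasU P Q (Suc n)) ^ 2"
    by (simp add: algebra_simps power2_eq_square)
  also have "\<dots> = (P * lucasV P Q n + (P^2 - 4*Q) * lucasU P Q n) ^ 2 - (P^2 - 4*Q) * (P * lucasU P Q n + lucasV P Q n) ^ 2"
    by (simp only: e1 e2)
  also have "\<dots> = 4 * Q * (lucasV P Q n ^ 2 - (P^2 - 4*Q) * lucasU P Q n ^ 2)"
    by (simp add: algebra_simps power2_eq_square)
  finally show ?case using Suc by simp
qed

lemma luc_step2:
  "2 * lucasV P Q (Suc (Suc n)) = (P^2 - 2*Q) * lucasV P Q n + P * (P^2 - 4*Q) * lucasU P Q n \<and>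
   2 * lucasU P Q (Suc (Suc n)) = (P^2 - 2*Q) * lucasU P Q n + P * lucasV P Q n"
proof -
  obtain e1 e2 where e1: "2 * lucasV P Q (Suc n) = P * lucasV P Q n + (P^2 - 4*Q) * lucasU P Q n"
    and e2: "2 * lucasU P Q (Suc n) = P * lucasU P Q n + lucasV P Q n" using luc_step by blast
  obtain f1 f2 where f1: "2 * lucasV P Q (Suc (Suc n)) = P * lucasV P Q (Suc n) + (P^2 - 4*Q) * lucasU P Q (Suc n)"
    and f2: "2 * lucasU P Q (Suc (Suc n)) = P * lucasU P Q (Suc n) + lucasV P Q (Suc n)" using luc_step by blast
  have a: "4 * lucasV P Q (Suc (Suc n)) = P * (2*lucasV P Q (Suc n)) + (P^2 - 4*Q) * (2*lucasU P Q (Suc n))"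
    using f1 by (simp add: algebra_simps)
  have a2: "4 * lucasV P Q (Suc (Suc n)) = 2 * (P^2 - 2*Q) * lucasV P Q n + 2 * P * (P^2 - 4*Q) * lucasU P Q n"
    unfolding a e1 e2 by (simp add: algebra_simps power2_eq_square)
  have b: "4 * lucasU P Q (Suc (Suc n)) = P * (2*lucasU P Q (Suc n)) + (2*lucasV P Q (Suc n))"
    using f2 by (simp add: algebra_simps)
  have b2: "4 * lucasU P Q (Suc (Suc n)) = 2 * (P^2 - 2*Q) * lucasU P Q n + 2 * P * lucasV P Q n"
    unfolding b e1 e2 by (simp add: algebra_simps power2_eq_square)
  show ?thesis using a2 b2 by linarith
qed

lemma luc_back2:
  "(P^2 - 2*Q) * lucasV P Q (Suc (Suc n)) - P * (P^2 - 4*Q) * lucasU P Q (Suc (Suc n)) = 2 * Q^2 * lucasV P Q n"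
proof -
  obtain e1 e2 where e1: "2 * lucasV P Q (Suc (Suc n)) = (P^2 - 2*Q) * lucasV P Q n + P * (P^2 - 4*Q) * lucasU P Q n"
    and e2: "2 * lucasU P Q (Suc (Suc n)) = (P^2 - 2*Q) * lucasU P Q n + P * lucasV P Q n" using luc_step2 by blast
  have "2 * ((P^2 - 2*Q) * lucasV P Q (Suc (Suc n)) - P * (P^2 - 4*Q) * lucasU P Q (Suc (Suc n)))
     = (P^2 - 2*Q) * (2*lucasV P Q (Suc (Suc n))) - P * (P^2 - 4*Q) * (2*lucasU P Q (Suc (Suc n)))"
    by (simp add: algebra_simps)
  also have "\<dots> = 4 * Q^2 * lucasV P Q n" unfolding e1 e2
    by (simp add: algebra_simps power2_eq_square)
  finally show ?thesis by simp
qed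

lemma lucasV_neg: "lucasV (-P) Q n = (-1)^n * lucasV P Q n"
  by (induction P Q n rule: lucasV.induct) (auto simp: algebra_simps)



lemma desc_m:
  fixes P :: int
  assumes P: "P \<ge> 1"
  shows "\<forall>x w. nat w = N \<longrightarrow> x > 0 \<longrightarrow> w \<ge> 0 \<longrightarrow>
     (x^2 - (P^2+4)*w^2 = 4 \<or> x^2 - (P^2+4)*w^2 = -4) \<longrightarrow>
     (\<exists>m. x = lucasV P (-1) m \<and> w = lucasU P (-1) m)"
proof (induction N rule: less_induct)
  case (less N)
  show ?case
  proof (intro allI impI)
    fix x w :: int
    assume wN: "nat w = N" and x0: "x > 0" and w0: "w \<ge> 0"
      and nrm: "x^2 - (P^2+4)*w^2 = 4 \<or> x^2 - (P^2+4)*w^2 = -4"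
    show "\<exists>m. x = lucasV P (-1) m \<and> w = lucasU P (-1) m"
    proof (cases "w = 0")
      case True
      have a: "x^2 \<ge> 0" by simp
      have "x^2 = 4 \<or> x^2 = -4" using nrm True by simp
      then have "x^2 = 2^2" using a by auto
      then have "x = 2" using x0 power2_eq_iff[of x 2] by auto
      then show ?thesis using True by (intro exI[of _ 0]) simp
    next
      case False
      then have w1: "w \<ge> 1" using w0 by simp
      show ?thesis
      proof (cases "P = 1 \<and> w = 1 \<and> x = 3")
        case True
        then show ?thesis by (intro exI[of _ 2]) (simp add: numeral_eq_Suc)
      next
        case nsp: False
        define d where "d = P^2 + 4"
        have nrm': "x^2 - d*w^2 = 4 \<or> x^2 - d*w^2 = -4" using nrm d_def by simp
        have ev: "even (x - P*w)"
        proof (rule ccontr)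
          assume "odd (x - P*w)"
          moreover have "x + P*w = (x - P*w) + 2*(P*w)" by simp
          ultimately have "odd (x + P*w)" by simp
          with \<open>odd (x - P*w)\<close> have "odd ((x - P*w) * (x + P*w))" by simp
          moreover have "(x - P*w) * (x + P*w) = 4*w^2 + (x^2 - d*w^2)"
            unfolding d_def by (simp add: algebra_simps power2_eq_square)
          ultimately have "(x - P*w) * (x + P*w) = 2*(2*w^2 + 2) \<or> (x - P*w) * (x + P*w) = 2*(2*w^2 - 2)"
            using nrm' by auto
          then have "even ((x - P*w) * (x + P*w))" by (elim disjE) (simp only: dvd_triv_left)+
          with \<open>odd ((x - P*w) * (x + P*w))\<close> show False by blast
        qed
        have ev2: "even (d*w - P*x)"
        proof -
          have "d*w - P*x = 4*w - P*(x - P*w)" unfolding d_def by (simp add: algebra_simps power2_eq_square)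
          then show ?thesis using ev by simp
        qed
        define x' where "x' = (d*w - P*x) div 2"
        define w' where "w' = (x - P*w) div 2"
        have x'e: "2*x' = d*w - P*x" using ev2 x'_def by simp
        have w'e: "2*w' = x - P*w" using ev w'_def by simp
        have dw: "d*w^2 = P^2*w^2 + 4*w^2" unfolding d_def by (simp add: algebra_simps)
        have ww: "w^2 \<ge> 1" using w1 by (simp add: one_le_power)
        have xPw: "x \<ge> P*w"
        proof (rule ccontr)
          assume "\<not> x \<ge> P*w"
          then have "x^2 < (P*w)^2" using x0 power_strict_mono[of x "P*w" 2] by linarith
          then have "x^2 < P^2*w^2" by (simp add: power_mult_distrib)
          then show False using nrm' dw ww by linarith
        qed
        have w'lt: "w' < w"
        proof (rule ccontr)
          assume "\<not> w' < w"
          then have "x \<ge> (P+2)*w" using w'e by (simp add: algebra_simps)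
          moreover have "0 \<le> (P+2)*w" using P w1 by simp
          ultimately have "x^2 \<ge> ((P+2)*w)^2" using power_mono[of "(P+2)*w" x 2] by blast
          also have "((P+2)*w)^2 = P^2*w^2 + 4*w^2 + 4*(P*w^2)" by (simp add: algebra_simps power2_eq_square)
          finally have "4*(P*w^2) \<le> 4" using nrm' dw by linarith
          moreover have "P*w^2 \<ge> 1*1" using mult_mono[OF P ww] P by simp
          ultimately have "P*w^2 = 1" by linarith
          moreover have "P*1 \<le> P*w^2" using mult_left_mono[OF ww, of P] P by simp
          ultimately have P1: "P = 1" using P by linarith
          then have "w^2 = 1^2" using \<open>P*w^2 = 1\<close> by simp
          then have "w = 1" using w1 using power2_eq_iff[of w 1] by auto
          with P1 have Pw: "P = 1 \<and> w = 1" by simp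
          then have "x^2 \<le> 3^2" using nrm' unfolding d_def by auto
          then have "x \<le> 3" using x0 power2_le_imp_le[of x 3] by simp
          moreover have "x \<ge> 3" using \<open>x \<ge> (P+2)*w\<close> Pw by simp
          ultimately show False using nsp Pw by simp
        qed
        have w'0: "w' \<ge> 0" using w'e xPw by simp
        have x'0: "x' > 0"
        proof (rule ccontr)
          assume "\<not> x' > 0"
          then have "d*w \<le> P*x" using x'e by simp
          moreover have "d*w \<ge> 0" using w1 unfolding d_def by simp
          ultimately have "(d*w)^2 \<le> (P*x)^2" using power_mono[of "d*w" "P*x" 2] by blast
          then have "d*(d*w^2) \<le> P^2*(x^2)" by (simp add: algebra_simps power2_eq_square)
          moreover have "x^2 \<le> d*w^2 + 4" using nrm' by auto
          then have "P^2*(x^2) \<le> P^2*(d*w^2 + 4)" using mult_left_mono[of "x^2" "d*w^2+4" "P^2"] by simp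
          ultimately have "d*(d*w^2) \<le> P^2*(d*w^2 + 4)" by linarith
          then have "4*(d*w^2) \<le> 4*P^2" unfolding d_def by (simp add: algebra_simps power2_eq_square)
          moreover have "d*w^2 \<ge> d*1" using mult_left_mono[OF ww, of d] unfolding d_def by simp
          ultimately show False unfolding d_def by simp
        qed
        have nrm2: "x'^2 - d*w'^2 = 4 \<or> x'^2 - d*w'^2 = -4"
        proof -
          have "4*(x'^2 - d*w'^2) = (2*x')^2 - d*(2*w')^2" by (simp add: algebra_simps power2_eq_square)
          also have "\<dots> = (d*w - P*x)^2 - d*(x - P*w)^2" by (simp only: x'e w'e)
          also have "\<dots> = -4*(x^2 - d*w^2)" unfolding d_def by (simp add: algebra_simps power2_eq_square)
          finally show ?thesis using nrm' by auto
        qed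
        have "nat w' < N" using w'lt w'0 wN by simp
        then obtain m where m: "x' = lucasV P (-1) m" "w' = lucasU P (-1) m"
          using less[of "nat w'"] x'0 w'0 nrm2 unfolding d_def by blast
        obtain e1 e2 where e1: "2 * lucasV P (-1) (Suc m) = P * lucasV P (-1) m + (P^2 - 4*(-1)) * lucasU P (-1) m"
          and e2: "2 * lucasU P (-1) (Suc m) = P * lucasU P (-1) m + lucasV P (-1) m" using luc_step by blast
        have "2 * lucasV P (-1) (Suc m) = P * x' + d * w'" using e1 m d_def by simp
        also have "2*(P * x' + d * w') = P*(2*x') + d*(2*w')" by (simp add: algebra_simps)
        also have "\<dots> = P*(d*w - P*x) + d*(x - P*w)" by (simp only: x'e w'e)
        also have "\<dots> = 2*(2*x)" unfolding d_def by (simp add: algebra_simps power2_eq_square)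
        finally have X: "x = lucasV P (-1) (Suc m)" by simp
        have "2 * lucasU P (-1) (Suc m) = P * w' + x'" using e2 m by simp
        also have "2*(P * w' + x') = P*(2*w') + (2*x')" by (simp add: algebra_simps)
        also have "\<dots> = P*(x - P*w) + (d*w - P*x)" by (simp only: x'e w'e)
        also have "\<dots> = 2*(2*w)" unfolding d_def by (simp add: algebra_simps power2_eq_square)
        finally have W: "w = lucasU P (-1) (Suc m)" by simp
        show ?thesis using X W by blast
      qed
    qed
  qed
qed



lemma desc_p:
  fixes P :: int
  assumes P: "P \<ge> 3"
  shows "\<forall>x w. nat w = N \<longrightarrow> x > 0 \<longrightarrow> w \<ge> 0 \<longrightarrow>
     x^2 - (P^2-4)*w^2 = 4 \<longrightarrow>
     (\<exists>m. x = lucasV P 1 m \<and> w = lucasU P 1 m)"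
proof (induction N rule: less_induct)
  case (less N)
  show ?case
  proof (intro allI impI)
    fix x w :: int
    assume wN: "nat w = N" and x0: "x > 0" and w0: "w \<ge> 0"
      and nrm: "x^2 - (P^2-4)*w^2 = 4"
    show "\<exists>m. x = lucasV P 1 m \<and> w = lucasU P 1 m"
    proof (cases "w = 0")
      case True
      have "x^2 = 2^2" using nrm True by simp
      then have "x = 2" using x0 power2_eq_iff[of x 2] by auto
      then show ?thesis using True by (intro exI[of _ 0]) simp
    next
      case False
      then have w1: "w \<ge> 1" using w0 by simp
      define d where "d = P^2 - 4"
      have nrm': "x^2 - d*w^2 = 4" using nrm d_def by simp
      have ev: "even (P*w - x)"
      proof (rule ccontr)
        assume "odd (P*w - x)"
        moreover have "P*w + x = (P*w - x) + 2*x" by simp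
        ultimately have "odd (P*w + x)" by simp
        with \<open>odd (P*w - x)\<close> have "odd ((P*w - x) * (P*w + x))" by simp
        moreover have "(P*w - x) * (P*w + x) = 4*w^2 - (x^2 - d*w^2)"
          unfolding d_def by (simp add: algebra_simps power2_eq_square)
        ultimately have "(P*w - x) * (P*w + x) = 2*(2*w^2 - 2)"
          using nrm' by auto
        then have "even ((P*w - x) * (P*w + x))" by (simp only: dvd_triv_left)
        with \<open>odd ((P*w - x) * (P*w + x))\<close> show False by blast
      qed
      have ev2: "even (P*x - d*w)"
      proof -
        have "P*x - d*w = 4*w - P*(P*w - x)" unfolding d_def by (simp add: algebra_simps power2_eq_square)
        then show ?thesis using ev by simp
      qed
      define x' where "x' = (P*x - d*w) div 2"
      define w' where "w' = (P*w - x) div 2"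
      have x'e: "2*x' = P*x - d*w" using ev2 x'_def by simp
      have w'e: "2*w' = P*w - x" using ev w'_def by simp
      have dw: "d*w^2 = P^2*w^2 - 4*w^2" unfolding d_def by (simp add: algebra_simps)
      have ww: "w^2 \<ge> 1" using w1 by (simp add: one_le_power)
      have xPw: "x \<le> P*w"
      proof (rule ccontr)
        assume "\<not> x \<le> P*w"
        moreover have "0 \<le> P*w" using P w1 by simp
        ultimately have "(P*w)^2 < x^2" using power_strict_mono[of "P*w" x 2] by linarith
        then have "P^2*w^2 < x^2" by (simp add: power_mult_distrib)
        then show False using nrm' dw ww by linarith
      qed
      have w'lt: "w' < w"
      proof (rule ccontr)
        assume "\<not> w' < w"
        then have "x \<le> (P-2)*w" using w'e by (simp add: algebra_simps)
        then have "x^2 \<le> ((P-2)*w)^2" using x0 power_mono[of x "(P-2)*w" 2] by linarith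
        also have "((P-2)*w)^2 = P^2*w^2 - 4*w^2 - 4*(P*w^2) + 8*w^2" by (simp add: algebra_simps power2_eq_square)
        finally have "4*(P*w^2) \<le> 8*w^2 - 4" using nrm' dw by linarith
        moreover have "P*w^2 \<ge> 3*w^2" using mult_right_mono[OF P, of "w^2"] by simp
        ultimately show False using ww by linarith
      qed
      have w'0: "w' \<ge> 0" using w'e xPw by simp
      have x'0: "x' > 0"
      proof (rule ccontr)
        assume "\<not> x' > 0"
        then have "P*x \<le> d*w" using x'e by simp
        moreover have "P*x \<ge> 0" using P x0 by simp
        ultimately have "(P*x)^2 \<le> (d*w)^2" using power_mono[of "P*x" "d*w" 2] by blast
        then have "P^2*(x^2) \<le> d*(d*w^2)" by (simp add: algebra_simps power2_eq_square)
        moreover have "x^2 = d*w^2 + 4" using nrm' by auto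
        ultimately have "P^2*(d*w^2) + 4*P^2 \<le> d*(d*w^2)" by (simp add: algebra_simps)
        then have "4*(d*w^2) + 4*P^2 \<le> 0" unfolding d_def by (simp add: algebra_simps power2_eq_square)
        moreover have "P*P \<ge> 3*3" using mult_mono[OF P P] P by simp
        then have "d \<ge> 0" unfolding d_def by (simp add: power2_eq_square)
        then have "d*w^2 \<ge> 0" by simp
        moreover have "P^2 > 0" using P by simp
        ultimately show False by linarith
      qed
      have nrm2: "x'^2 - (P^2-4)*w'^2 = 4"
      proof -
        have "4*(x'^2 - d*w'^2) = (2*x')^2 - d*(2*w')^2" by (simp add: algebra_simps power2_eq_square)
        also have "\<dots> = (P*x - d*w)^2 - d*(P*w - x)^2" by (simp only: x'e w'e)
        also have "\<dots> = 4*(x^2 - d*w^2)" unfolding d_def by (simp add: algebra_simps power2_eq_square)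
        finally show ?thesis using nrm' d_def by auto
      qed
      have "nat w' < N" using w'lt w'0 wN by simp
      then obtain m where m: "x' = lucasV P 1 m" "w' = lucasU P 1 m"
        using less[of "nat w'"] x'0 w'0 nrm2 by blast
      obtain e1 e2 where e1: "2 * lucasV P 1 (Suc m) = P * lucasV P 1 m + (P^2 - 4*1) * lucasU P 1 m"
        and e2: "2 * lucasU P 1 (Suc m) = P * lucasU P 1 m + lucasV P 1 m" using luc_step by blast
      have "2 * lucasV P 1 (Suc m) = P * x' + d * w'" using e1 m d_def by simp
      also have "2*(P * x' + d * w') = P*(2*x') + d*(2*w')" by (simp add: algebra_simps)
      also have "\<dots> = P*(P*x - d*w) + d*(P*w - x)" by (simp only: x'e w'e)
      also have "\<dots> = 2*(2*x)" unfolding d_def by (simp add: algebra_simps power2_eq_square)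
      finally have X: "x = lucasV P 1 (Suc m)" by simp
      have "2 * lucasU P 1 (Suc m) = P * w' + x'" using e2 m by simp
      also have "2*(P * w' + x') = P*(2*w') + (2*x')" by (simp add: algebra_simps)
      also have "\<dots> = P*(P*w - x) + (P*x - d*w)" by (simp only: x'e w'e)
      also have "\<dots> = 2*(2*w)" unfolding d_def by (simp add: algebra_simps power2_eq_square)
      finally have W: "w = lucasU P 1 (Suc m)" by simp
      show ?thesis using X W by blast
    qed
  qed
qed



lemma divisors_pq:
  assumes "prime (p::nat)" "prime q"
  shows "{d. d dvd p*q \<and> d > 0} = {1, p, q, p*q}"
proof
  show "{d. d dvd p*q \<and> d > 0} \<subseteq> {1, p, q, p*q}"
  proof
    fix d assume "d \<in> {d. d dvd p*q \<and> d > 0}"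
    then have "d dvd p*q" by simp
    then obtain a b where ab: "d = a*b" "a dvd p" "b dvd q" using division_decomp by blast
    have "a = 1 \<or> a = p" using ab(2) assms(1) prime_nat_iff by blast
    moreover have "b = 1 \<or> b = q" using ab(3) assms(2) prime_nat_iff by blast
    ultimately show "d \<in> {1, p, q, p*q}" using ab(1) by auto
  qed
next
  show "{1, p, q, p*q} \<subseteq> {d. d dvd p*q \<and> d > 0}"
    using assms prime_gt_0_nat by auto
qed

lemma sigma_p:
  assumes "prime (p::nat)" shows "sigma 2 p = 1 + p^2"
proof -
  have "{d. d dvd p \<and> d > 0} = {1, p}"
  proof
    show "{d. d dvd p \<and> d > 0} \<subseteq> {1, p}" using assms prime_nat_iff by blast
    show "{1, p} \<subseteq> {d. d dvd p \<and> d > 0}" using assms prime_gt_0_nat by auto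
  qed
  moreover have "p \<noteq> 1" using assms by auto
  ultimately show ?thesis unfolding sigma_def by simp
qed

lemma sigma_pp:
  assumes "prime (p::nat)" shows "sigma 2 (p*p) = 1 + p^2 + (p*p)^2"
proof -
  have p1: "p > 1" using assms prime_gt_1_nat by blast
  have "p*p \<noteq> 1" "p*p \<noteq> p" "p \<noteq> 1" using p1 by auto
  then show ?thesis unfolding sigma_def divisors_pq[OF assms assms] by simp
qed

lemma sigma_pq:
  assumes "prime (p::nat)" "prime q" "p \<noteq> q" shows "sigma 2 (p*q) = 1 + p^2 + q^2 + (p*q)^2"
proof -
  have p1: "p > 1" "q > 1" using assms prime_gt_1_nat by blast+
  have "p*q \<noteq> 1" "p*q \<noteq> p" "p*q \<noteq> q" "p \<noteq> 1" "q \<noteq> 1"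
    using p1 by (auto simp: mult_eq_self_implies_10)
  then show ?thesis unfolding sigma_def divisors_pq[OF assms(1,2)] using assms(3) by simp
qed

lemma sigma_ge:
  assumes "m dvd n" "1 < m" "m < n"
  shows "sigma 2 n \<ge> 1 + m^2 + n^2"
proof -
  have fin: "finite {d. d dvd n \<and> d > 0}"
    by (rule finite_subset[of _ "{..n}"]) (use assms in \<open>auto dest: dvd_imp_le\<close>)
  have sub: "{1, m, n} \<subseteq> {d. d dvd n \<and> d > 0}" using assms by auto
  have "sum (\<lambda>d. d^2) {1, m, n} \<le> sum (\<lambda>d. d^2) {d. d dvd n \<and> d > 0}"
    by (rule sum_mono2[OF fin sub]) auto
  moreover have "sum (\<lambda>d. d^2) {1, m, (n::nat)} = 1 + m^2 + n^2" using assms by simp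
  ultimately show ?thesis unfolding sigma_def by simp
qed

lemma reduce:
  fixes A B :: int and n :: nat
  assumes npos: "n > 0"
    and eq: "int (sigma 2 n) - int n ^ 2 = A * int n + B"
    and big: "int n > (\<bar>A\<bar> + \<bar>B\<bar>) ^ 3"
    and A0: "A \<noteq> 0" and A1: "A \<noteq> 1"
  shows "\<exists>p q. prime p \<and> prime q \<and> p < q \<and> n = p*q \<and>
           1 + int p^2 + int q^2 = A * int p * int q + B \<and> int p > \<bar>A\<bar> + \<bar>B\<bar>"
proof -
  define C where "C = \<bar>A\<bar> + \<bar>B\<bar>"
  have C1: "C \<ge> 1" using A0 unfolding C_def by linarith
  have CC: "C \<le> C^3"
  proof -
    have "C*1 \<le> C*C" using C1 by (intro mult_left_mono) auto
    moreover have "C*C*1 \<le> C*C*C" using C1 by (intro mult_left_mono) auto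
    ultimately show ?thesis by (simp add: power3_eq_cube)
  qed
  have n1: "n > 1" using big CC C1 unfolding C_def by linarith
  define p where "p = (LEAST d. 1 < d \<and> d dvd n)"
  have pex: "1 < p \<and> p dvd n" unfolding p_def by (rule LeastI[of _ n]) (use n1 in auto)
  have pmin: "\<And>r. 1 < r \<Longrightarrow> r dvd n \<Longrightarrow> p \<le> r" unfolding p_def by (rule Least_le) simp
  have pp: "prime p"
    unfolding prime_nat_iff
  proof (intro conjI allI impI)
    show "1 < p" using pex by simp
    fix r assume "r dvd p"
    then have "r \<le> p" "r dvd n" using pex dvd_imp_le dvd_trans by auto
    moreover have "r \<noteq> 0"
    proof
      assume "r = 0" then show False using \<open>r dvd p\<close> pex by simp
    qed
    ultimately show "r = 1 \<or> r = p" using pmin[of r] by (cases "r = 1") auto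
  qed
  define m where "m = n div p"
  have nm: "n = p*m" using pex m_def by simp
  have m0: "m > 0" using nm npos by (cases m) auto
  show ?thesis
  proof (cases "m = 1")
    case True
    then have "n = p" using nm by simp
    then have "int (sigma 2 n) = 1 + int n^2" using sigma_p[OF pp] by simp
    then have "A * int n = 1 - B" using eq by simp
    then have "\<bar>A * int n\<bar> = \<bar>1 - B\<bar>" by simp
    then have "\<bar>A\<bar> * int n = \<bar>1 - B\<bar>" by (simp add: abs_mult)
    moreover have "\<bar>A\<bar> * int n \<ge> 1 * int n" using A0 by (intro mult_right_mono) auto
    moreover have "\<bar>1 - B\<bar> \<le> 1 + \<bar>B\<bar>" "\<bar>A\<bar> \<ge> 1" using A0 by arith+
    ultimately have "int n \<le> C" unfolding C_def by linarith
    then show ?thesis using big CC unfolding C_def by linarith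
  next
    case False
    then have m2: "m > 1" using m0 by simp
    have mdvd: "m dvd n" using nm by simp
    have pm: "p \<le> m" using pmin[OF m2 mdvd] .
    have mn: "m < n" using nm pex m2 by simp
    have "sigma 2 n \<ge> 1 + m^2 + n^2" by (rule sigma_ge[OF mdvd m2 mn])
    then have "int (sigma 2 n) \<ge> int (1 + m^2 + n^2)" by (simp only: of_nat_le_iff)
    then have "int (sigma 2 n) \<ge> 1 + int m^2 + int n^2" by simp
    then have "1 + int m^2 \<le> A * int n + B" using eq by linarith
    also have "A * int n + B \<le> \<bar>A\<bar> * int n + \<bar>B\<bar> * int n"
    proof -
      have "A * int n \<le> \<bar>A\<bar> * int n" by (intro mult_right_mono) auto
      moreover have "\<bar>B\<bar> * 1 \<le> \<bar>B\<bar> * int n" using npos by (intro mult_left_mono) auto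
      moreover have "B \<le> \<bar>B\<bar>" by simp
      ultimately show ?thesis by linarith
    qed
    also have "\<dots> = C * int p * int m" unfolding C_def nm by (simp add: algebra_simps)
    finally have "int m * int m < (C * int p) * int m" by (simp add: power2_eq_square)
    then have mC: "int m < C * int p" using m0 by (simp add: mult_less_cancel_right)
    have pC: "int p > C"
    proof (rule ccontr)
      assume "\<not> int p > C"
      then have "int p \<le> C" by simp
      have "int n = int p * int m" using nm by simp
      also have "\<dots> \<le> C * int m" using \<open>int p \<le> C\<close> by (intro mult_right_mono) auto
      also have "\<dots> \<le> C * (C * int p)" using mC C1 by (intro mult_left_mono) auto
      also have "\<dots> \<le> C * (C * C)" using \<open>int p \<le> C\<close> C1 by (intro mult_left_mono) auto
      finally show False using big unfolding C_def by (simp add: power3_eq_cube)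
    qed
    have mpp: "int m < int p * int p"
    proof -
      have "C * int p \<le> int p * int p" using pC by (intro mult_right_mono) auto
      then show ?thesis using mC by linarith
    qed
    have pq: "prime m"
      unfolding prime_nat_iff
    proof (intro conjI allI impI)
      show "1 < m" using m2 .
      fix r assume rm: "r dvd m"
      show "r = 1 \<or> r = m"
      proof (rule ccontr)
        assume nr: "\<not> (r = 1 \<or> r = m)"
        have r0: "r \<noteq> 0" using rm m0 by auto
        then have r1: "1 < r" using nr by simp
        have "r dvd n" using rm mdvd dvd_trans by blast
        then have rp: "p \<le> r" using pmin r1 by blast
        obtain s where s: "m = r*s" using rm by blast
        have "s \<noteq> 1" using s nr by auto
        moreover have "s \<noteq> 0" using s m0 by auto
        ultimately have s1: "1 < s" by simp
        have "s dvd n" using s mdvd dvd_trans[of s m n] by simp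
        then have sp: "p \<le> s" using pmin s1 by blast
        have "p*p \<le> r*s" using rp sp by (intro mult_mono) auto
        then have "int (p * p) \<le> int m" using s by (simp only: of_nat_le_iff)
        then have "int p * int p \<le> int m" by simp
        then show False using mpp by simp
      qed
    qed
    show ?thesis
    proof (cases "m = p")
      case True
      then have "int (sigma 2 n) = 1 + int p^2 + int n^2" using sigma_pp[OF pp] nm by simp
      then have e: "(1 - A) * int p^2 = B - 1" using eq nm True by (simp add: algebra_simps power2_eq_square)
      have "\<bar>1 - A\<bar> \<ge> 1" using A1 by linarith
      then have "1 * int p^2 \<le> \<bar>1 - A\<bar> * int p^2" by (intro mult_right_mono) auto
      also have "\<dots> = \<bar>(1 - A) * int p^2\<bar>" by (simp add: abs_mult)
      also have "\<dots> = \<bar>B - 1\<bar>" using e by simp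
      moreover have "\<bar>B - 1\<bar> \<le> 1 + \<bar>B\<bar>" "\<bar>A\<bar> \<ge> 1" using A0 by arith+
      ultimately have "int p^2 \<le> C" unfolding C_def by linarith
      moreover have "int p \<le> int p^2" using pC C1 by (simp add: power2_eq_square)
      ultimately show ?thesis using pC by linarith
    next
      case False
      then have "int (sigma 2 n) = 1 + int p^2 + int m^2 + int n^2" using sigma_pq[OF pp pq] nm by simp
      then have "1 + int p^2 + int m^2 = A * int p * int m + B" using eq nm by (simp add: algebra_simps)
      moreover have "p < m" using pm False by simp
      ultimately show ?thesis using pp pq nm pC unfolding C_def by blast
    qed
  qed
qed



lemma sqf_dvd:
  fixes d t :: int
  assumes sq: "squarefree d" and dv: "d dvd t^2"
  shows "d dvd t"
proof -
  have d0: "d \<noteq> 0" using sq by auto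
  then have g0: "gcd d t \<noteq> 0" by simp
  obtain d' t' where dt: "d = d' * gcd d t" "t = t' * gcd d t" "coprime d' t'"
    using gcd_coprime_exists[OF g0] by blast
  define g where "g = gcd d t"
  have "d' * g dvd (t' * g)^2" using dv dt g_def by simp
  then have "d' * g dvd (g * t'^2) * g" by (simp add: power2_eq_square algebra_simps)
  then have "d' dvd g * t'^2" using g0 g_def d0 by simp
  moreover have "coprime d' (t'^2)" using dt(3) by simp
  ultimately have "d' dvd g" using coprime_dvd_mult_left_iff by blast
  then have "d'^2 dvd d' * g" by (simp add: power2_eq_square)
  then have "d'^2 dvd d" using dt g_def by (simp add: mult.commute)
  then have "is_unit d'" using squarefreeD[OF sq] by blast
  then have "d dvd g" using dt g_def by (metis unit_dvd_iff dvd_mult_unit_iff' dvd_refl mult.commute dvd_mult_unit_iff)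
  then show ?thesis using g_def by (metis gcd_dvd2 dvd_trans)
qed

lemma sq_step:
  fixes P d A p q s :: int
  assumes P0: "P \<noteq> 0" and sq: "squarefree d" and AD: "A^2 - 4 = P^2 * d"
    and e: "p^2 + q^2 - A*p*q = s * P^2 * d"
  shows "\<exists>w. p^2 - d*w^2 = -4*s \<and> 2*q = A*p + P*d*w"
proof -
  define u where "u = 2*q - A*p"
  have "u^2 = (A^2-4)*p^2 + 4*(p^2 + q^2 - A*p*q)" unfolding u_def by (simp add: algebra_simps power2_eq_square)
  also have "\<dots> = P^2 * (d*(p^2 + 4*s))" unfolding AD e by (simp add: algebra_simps)
  finally have u2: "u^2 = P^2 * (d*(p^2 + 4*s))" .
  then have "P^2 dvd u^2" by simp
  then have "P dvd u" by simp
  then obtain t where t: "u = P*t" by blast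
  have "P^2 * t^2 = P^2 * (d*(p^2 + 4*s))" using u2 t by (simp add: power_mult_distrib)
  then have t2: "t^2 = d*(p^2 + 4*s)" using P0 by simp
  then have "d dvd t^2" by simp
  then have "d dvd t" using sqf_dvd[OF sq] by blast
  then obtain w where w: "t = d*w" by blast
  have "d * (d * w^2) = d * (p^2 + 4*s)" using t2 w by (simp add: power_mult_distrib power2_eq_square algebra_simps)
  then have "d*w^2 = p^2 + 4*s" using sq by auto
  moreover have "2*q = A*p + P*d*w" using u_def t w by simp
  ultimately show ?thesis by (intro exI[of _ w]) auto
qed



lemma neg1_pow_even: "((-1::int)^m = 1) \<Longrightarrow> even m"
proof (rule ccontr)
  assume "(-1::int)^m = 1" "odd m"
  then show False by simp
qed
lemma neg1_pow_odd: "((-1::int)^m = -1) \<Longrightarrow> odd m"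
proof (rule ccontr)
  assume "(-1::int)^m = -1" "\<not> odd m"
  then show False by simp
qed

lemma primabs: "prime (p::nat) \<Longrightarrow> int p = x \<Longrightarrow> prime \<bar>x\<bar>"
proof -
  assume "prime p" "int p = x"
  then have "x = \<bar>x\<bar>" by auto
  then show "prime \<bar>x\<bar>" using \<open>prime p\<close> \<open>int p = x\<close> by (metis prime_nat_int_transfer)
qed

lemma fin:
  assumes "prime (p::nat)" "prime q" "n = p*q" "int p = x" "int q = y"
  shows "int n = x*y \<and> prime \<bar>x\<bar> \<and> prime \<bar>y\<bar>" "int n = y*x \<and> prime \<bar>y\<bar> \<and> prime \<bar>x\<bar>"
  using assms primabs[OF assms(1,4)] primabs[OF assms(2,5)] by (auto simp: mult.commute)

lemma case1:
  fixes P A B :: int and n :: nat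
  assumes P: "P \<ge> 1" and npos: "n > 0"
    and eq: "int (sigma 2 n) - int n ^ 2 = A * int n + B"
    and big: "int n > (\<bar>A\<bar> + \<bar>B\<bar>) ^ 3"
    and sq: "squarefree (P^2 + 4)" and hA: "A = P^2 + 2" and hB: "B = -(P^4) - 4 * P^2 + 1"
  shows "\<exists>k::nat. int n = lucasV P (-1) (2*k) * lucasV P (-1) (2*k+2) \<and>
          prime \<bar>lucasV P (-1) (2*k)\<bar> \<and> prime \<bar>lucasV P (-1) (2*k+2)\<bar>"
proof -
  have "A \<ge> 2" using hA by simp
  then have A0: "A \<noteq> 0" "A \<noteq> 1" by auto
  obtain p q where pq: "prime p" "prime q" "p < q" "n = p*q"
     "1 + int p^2 + int q^2 = A * int p * int q + B"
    using reduce[OF npos eq big A0] by blast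
  define d where "d = P^2 + 4"
  have e: "int p^2 + int q^2 - A * int p * int q = (-1) * P^2 * d"
  proof -
    have "P^2 * d = P^2*P^2 + 4*P^2" by (simp add: d_def algebra_simps)
    moreover have "P^4 = P^2*P^2" by algebra
    ultimately show ?thesis using pq(5) hB by linarith
  qed
  have AD: "A^2 - 4 = P^2 * d" using hA d_def by (simp add: algebra_simps power2_eq_square)
  have P0: "P \<noteq> 0" using P by simp
  have sqd: "squarefree d" using sq d_def by simp
  obtain w where w: "int p^2 - d*w^2 = -4*(-1)" "2 * int q = A * int p + P*d*w"
    using sq_step[OF P0 sqd AD e] by blast
  have p0: "int p > 0" using pq(1) prime_gt_0_nat by simp
  have "int p^2 - (P^2+4)*\<bar>w\<bar>^2 = 4" using w(1) d_def by simp
  then have nn: "int p^2 - (P^2+4)*\<bar>w\<bar>^2 = 4 \<or> int p^2 - (P^2+4)*\<bar>w\<bar>^2 = -4" by blast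
  note D = desc_m[OF P, of "nat \<bar>w\<bar>", rule_format, of "\<bar>w\<bar>" "int p"]
  obtain m where m: "int p = lucasV P (-1) m" "\<bar>w\<bar> = lucasU P (-1) m"
    using D[OF refl p0 abs_ge_zero nn] by blast
  have "4 * (-1::int) ^ m = lucasV P (-1) m ^ 2 - (P^2 - 4*(-1)) * lucasU P (-1) m ^ 2" by (rule luc_norm[symmetric])
  also have "lucasU P (-1) m ^ 2 = w^2" using m(2) by (metis power2_abs)
  also have "lucasV P (-1) m = int p" using m(1) by simp
  also have "int p ^ 2 - (P^2 - 4*(-1)) * w^2 = 4" using w(1) d_def by simp
  finally have "(-1::int)^m = 1" by simp
  then have "even m" by (rule neg1_pow_even)
  then obtain j where j: "m = 2*j" by blast
  obtain s1 s2 where s1: "2 * lucasV P (-1) (Suc (Suc m)) = (P^2 - 2*(-1)) * lucasV P (-1) m + P * (P^2 - 4*(-1)) * lucasU P (-1) m"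
    using luc_step2 by blast
  show ?thesis
  proof (cases "w \<ge> 0")
    case True
    then have "2 * int q = 2 * lucasV P (-1) (Suc (Suc m))" using s1 w(2) m hA d_def by simp
    then have "int q = lucasV P (-1) (2*j+2)" using j by simp
    moreover have "int p = lucasV P (-1) (2*j)" using m(1) j by simp
    ultimately show ?thesis using fin[OF pq(1,2,4)] by blast
  next
    case False
    then have wn: "w = - lucasU P (-1) m" using m by simp
    show ?thesis
    proof (cases j)
      case 0
      then have "2 * int q = 2 * lucasV P (-1) 2" using w(2) wn m hA j by (simp add: numeral_eq_Suc)
      then have "int q = lucasV P (-1) 2" by linarith
      then have "int q = lucasV P (-1) (2*0+2)" by (simp only: mult_zero_right add_0_left)
      moreover have "int p = lucasV P (-1) (2*0)" using m j 0 by simp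
      ultimately show ?thesis using fin[OF pq(1,2,4)] by blast
    next
      case (Suc j')
      then have mm: "m = Suc (Suc (2*j'))" using j by simp
      have "(P^2 - 2*(-1)) * lucasV P (-1) m - P * (P^2 - 4*(-1)) * lucasU P (-1) m = 2 * (-1)^2 * lucasV P (-1) (2*j')"
        unfolding mm by (rule luc_back2)
      then have "2 * int q = 2 * lucasV P (-1) (2*j')" using w(2) wn m hA d_def by simp
      then have "int q = lucasV P (-1) (2*j')" by simp
      moreover have "int p = lucasV P (-1) (2*j'+2)" using m mm by simp
      ultimately show ?thesis using fin[OF pq(1,2,4)] by blast
    qed
  qed
qed

lemma case2:
  fixes P A B :: int and n :: nat
  assumes P: "P \<ge> 1" and npos: "n > 0"
    and eq: "int (sigma 2 n) - int n ^ 2 = A * int n + B"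
    and big: "int n > (\<bar>A\<bar> + \<bar>B\<bar>) ^ 3"
    and sq: "squarefree (P^2 + 4)" and hA: "A = P^2 + 2" and hB: "B = P^4 + 4 * P^2 + 1"
  shows "\<exists>k::nat. k \<ge> 1 \<and> int n = lucasV P (-1) (2*k-1) * lucasV P (-1) (2*k+1) \<and>
          prime \<bar>lucasV P (-1) (2*k-1)\<bar> \<and> prime \<bar>lucasV P (-1) (2*k+1)\<bar>"
proof -
  have "A \<ge> 2" using hA by simp
  then have A0: "A \<noteq> 0" "A \<noteq> 1" by auto
  obtain p q where pq: "prime p" "prime q" "p < q" "n = p*q"
     "1 + int p^2 + int q^2 = A * int p * int q + B"
    using reduce[OF npos eq big A0] by blast
  define d where "d = P^2 + 4"
  have e: "int p^2 + int q^2 - A * int p * int q = 1 * P^2 * d"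
  proof -
    have "P^2 * d = P^2*P^2 + 4*P^2" by (simp add: d_def algebra_simps)
    moreover have "P^4 = P^2*P^2" by algebra
    ultimately show ?thesis using pq(5) hB by linarith
  qed
  have AD: "A^2 - 4 = P^2 * d" using hA d_def by (simp add: algebra_simps power2_eq_square)
  have P0: "P \<noteq> 0" using P by simp
  have sqd: "squarefree d" using sq d_def by simp
  obtain w where w: "int p^2 - d*w^2 = -4*1" "2 * int q = A * int p + P*d*w"
    using sq_step[OF P0 sqd AD e] by blast
  have p0: "int p > 0" using pq(1) prime_gt_0_nat by simp
  have q0: "int q > 0" using pq(2) prime_gt_0_nat by simp
  have "int p^2 - (P^2+4)*\<bar>w\<bar>^2 = -4" using w(1) d_def by simp
  then have nn: "int p^2 - (P^2+4)*\<bar>w\<bar>^2 = 4 \<or> int p^2 - (P^2+4)*\<bar>w\<bar>^2 = -4" by blast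
  note D = desc_m[OF P, of "nat \<bar>w\<bar>", rule_format, of "\<bar>w\<bar>" "int p"]
  obtain m where m: "int p = lucasV P (-1) m" "\<bar>w\<bar> = lucasU P (-1) m"
    using D[OF refl p0 abs_ge_zero nn] by blast
  have "4 * (-1::int) ^ m = lucasV P (-1) m ^ 2 - (P^2 - 4*(-1)) * lucasU P (-1) m ^ 2" by (rule luc_norm[symmetric])
  also have "lucasU P (-1) m ^ 2 = w^2" using m(2) by (metis power2_abs)
  also have "lucasV P (-1) m = int p" using m(1) by simp
  also have "int p ^ 2 - (P^2 - 4*(-1)) * w^2 = -4" using w(1) d_def by simp
  finally have "(-1::int)^m = -1" by simp
  then have "odd m" by (rule neg1_pow_odd)
  then obtain j where j: "m = 2*j+1" using oddE by blast
  obtain s1 where s1: "2 * lucasV P (-1) (Suc (Suc m)) = (P^2 - 2*(-1)) * lucasV P (-1) m + P * (P^2 - 4*(-1)) * lucasU P (-1) m"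
    using luc_step2 by blast
  show ?thesis
  proof (cases "w \<ge> 0")
    case True
    then have "2 * int q = 2 * lucasV P (-1) (Suc (Suc m))" using s1 w(2) m hA d_def by simp
    then have "int q = lucasV P (-1) (2*(Suc j)+1)" using j by simp
    moreover have "int p = lucasV P (-1) (2*(Suc j)-1)" using m(1) j by simp
    ultimately have "int n = lucasV P (-1) (2*(Suc j)-1) * lucasV P (-1) (2*(Suc j)+1) \<and>
          prime \<bar>lucasV P (-1) (2*(Suc j)-1)\<bar> \<and> prime \<bar>lucasV P (-1) (2*(Suc j)+1)\<bar>"
      using fin[OF pq(1,2,4)] by blast
    then show ?thesis by (intro exI[of _ "Suc j"]) simp
  next
    case False
    then have wn: "w = - lucasU P (-1) m" using m by simp
    show ?thesis
    proof (cases j)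
      case 0
      then have "m = 1" using j by simp
      then have "2 * int q = A * P - P * d" using w(2) wn m by simp
      also have "\<dots> = -2 * P" unfolding hA d_def by (simp add: algebra_simps)
      finally show ?thesis using q0 P by simp
    next
      case (Suc j')
      then have mm: "m = Suc (Suc (2*j'+1))" using j by simp
      have "(P^2 - 2*(-1)) * lucasV P (-1) m - P * (P^2 - 4*(-1)) * lucasU P (-1) m = 2 * (-1)^2 * lucasV P (-1) (2*j'+1)"
        unfolding mm by (rule luc_back2)
      then have "2 * int q = 2 * lucasV P (-1) (2*j'+1)" using w(2) wn m hA d_def by simp
      then have "int q = lucasV P (-1) (2*(Suc j')-1)" by simp
      moreover have "int p = lucasV P (-1) (2*(Suc j')+1)" using m mm by simp
      ultimately have "int n = lucasV P (-1) (2*(Suc j')-1) * lucasV P (-1) (2*(Suc j')+1) \<and>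
          prime \<bar>lucasV P (-1) (2*(Suc j')-1)\<bar> \<and> prime \<bar>lucasV P (-1) (2*(Suc j')+1)\<bar>"
        using fin[OF pq(1,2,4)] by blast
      then show ?thesis by (intro exI[of _ "Suc j'"]) simp
    qed
  qed
qed

lemma case3:
  fixes P A B :: int and n :: nat
  assumes P: "P \<ge> 1" and npos: "n > 0"
    and eq: "int (sigma 2 n) - int n ^ 2 = A * int n + B"
    and big: "int n > (\<bar>A\<bar> + \<bar>B\<bar>) ^ 3"
    and sq: "squarefree (P^2 - 4)" and hA: "A = P^2 - 2" and hB: "B = -(P^4) + 4 * P^2 + 1"
  shows "\<exists>k::nat. k \<ge> 1 \<and> int n = lucasV P 1 (k-1) * lucasV P 1 (k+1) \<and>
          prime \<bar>lucasV P 1 (k-1)\<bar> \<and> prime \<bar>lucasV P 1 (k+1)\<bar>"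
proof (cases "P = 1")
  case True
  then have A0: "A \<noteq> 0" "A \<noteq> 1" using hA by auto
  obtain p q where pq: "prime p" "prime q" "p < q" "n = p*q"
     "1 + int p^2 + int q^2 = A * int p * int q + B"
    using reduce[OF npos eq big A0] by blast
  have "A = -1" "B = 4" using hA hB True by auto
  then have "int p^2 + int q^2 + int p * int q = 3" using pq(5) by simp
  moreover have "int p \<ge> 2" "int q \<ge> 2" using pq(1,2) prime_ge_2_nat by auto
  moreover have "int p^2 \<ge> 0" "int q^2 \<ge> 0" by simp_all
  moreover have "int p * int q \<ge> 2 * 2" using \<open>int p \<ge> 2\<close> \<open>int q \<ge> 2\<close> by (intro mult_mono) auto
  ultimately show ?thesis by linarith
next
  case False
  then have P2: "P \<ge> 2" using P by simp
  then have "P*P \<ge> 2*2" using mult_mono[OF P2 P2] by simp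
  then have "A \<ge> 2" using hA by (simp add: power2_eq_square)
  then have A0: "A \<noteq> 0" "A \<noteq> 1" by auto
  have P3: "P \<ge> 3"
  proof (rule ccontr)
    assume "\<not> P \<ge> 3"
    then have "P = 2" using P2 by simp
    then show False using sq by simp
  qed
  obtain p q where pq: "prime p" "prime q" "p < q" "n = p*q"
     "1 + int p^2 + int q^2 = A * int p * int q + B"
    using reduce[OF npos eq big A0] by blast
  define d where "d = P^2 - 4"
  have e: "int p^2 + int q^2 - A * int p * int q = (-1) * P^2 * d"
  proof -
    have "P^2 * d = P^2*P^2 - 4*P^2" by (simp add: d_def algebra_simps)
    moreover have "P^4 = P^2*P^2" by algebra
    ultimately show ?thesis using pq(5) hB by linarith
  qed
  have AD: "A^2 - 4 = P^2 * d" unfolding hA d_def by (simp add: algebra_simps power2_eq_square)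
  have P0: "P \<noteq> 0" using P by simp
  have sqd: "squarefree d" using sq d_def by simp
  obtain w where w: "int p^2 - d*w^2 = -4*(-1)" "2 * int q = A * int p + P*d*w"
    using sq_step[OF P0 sqd AD e] by blast
  have p0: "int p > 0" using pq(1) prime_gt_0_nat by simp
  have nn: "int p^2 - (P^2-4)*\<bar>w\<bar>^2 = 4" using w(1) d_def by simp
  note D = desc_p[OF P3, of "nat \<bar>w\<bar>", rule_format, of "\<bar>w\<bar>" "int p"]
  obtain m where m: "int p = lucasV P 1 m" "\<bar>w\<bar> = lucasU P 1 m"
    using D[OF refl p0 abs_ge_zero nn] by blast
  obtain s1 where s1: "2 * lucasV P 1 (Suc (Suc m)) = (P^2 - 2*1) * lucasV P 1 m + P * (P^2 - 4*1) * lucasU P 1 m"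
    using luc_step2 by blast
  show ?thesis
  proof (cases "w \<ge> 0")
    case True
    then have "2 * int q = 2 * lucasV P 1 (Suc (Suc m))" using s1 w(2) m hA d_def by simp
    then have "int q = lucasV P 1 (Suc m + 1)" by simp
    moreover have "int p = lucasV P 1 (Suc m - 1)" using m(1) by simp
    ultimately have "int n = lucasV P 1 (Suc m - 1) * lucasV P 1 (Suc m + 1) \<and>
          prime \<bar>lucasV P 1 (Suc m - 1)\<bar> \<and> prime \<bar>lucasV P 1 (Suc m + 1)\<bar>"
      using fin[OF pq(1,2,4)] by blast
    then show ?thesis by (intro exI[of _ "Suc m"]) simp
  next
    case False
    then have wn: "w = - lucasU P 1 m" using m by simp
    show ?thesis
    proof (cases m)
      case 0
      then have "2 * int q = 2 * lucasV P 1 2" using w(2) wn m hA by (simp add: numeral_eq_Suc)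
      then have "int q = lucasV P 1 2" by linarith
      then have "int q = lucasV P 1 (1+1)" by (simp only: one_add_one)
      moreover have "int p = lucasV P 1 (1-1)" using m 0 by simp
      ultimately have "int n = lucasV P 1 (1 - 1) * lucasV P 1 (1 + 1) \<and>
          prime \<bar>lucasV P 1 (1 - 1)\<bar> \<and> prime \<bar>lucasV P 1 (1 + 1)\<bar>"
        using fin[OF pq(1,2,4)] by blast
      then show ?thesis by - (rule exI[of _ 1], rule conjI, simp, assumption)
    next
      case (Suc m1)
      show ?thesis
      proof (cases m1)
        case 0
        then have "m = 1" using Suc by simp
        then have "2 * int q = A * P - P * d" using w(2) wn m by simp
        also have "\<dots> = 2 * P" unfolding hA d_def by (simp add: algebra_simps)
        finally have "int q = int p" using m \<open>m = 1\<close> by simp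
        then show ?thesis using pq(3) by simp
      next
        case (Suc m')
        then have mm: "m = Suc (Suc m')" using \<open>m = Suc m1\<close> by simp
        have "(P^2 - 2*1) * lucasV P 1 m - P * (P^2 - 4*1) * lucasU P 1 m = 2 * 1^2 * lucasV P 1 m'"
          unfolding mm by (rule luc_back2)
        then have "2 * int q = 2 * lucasV P 1 m'" using w(2) wn m hA d_def by simp
        then have "int q = lucasV P 1 (Suc m' - 1)" by simp
        moreover have "int p = lucasV P 1 (Suc m' + 1)" using m mm by simp
        ultimately have "int n = lucasV P 1 (Suc m' - 1) * lucasV P 1 (Suc m' + 1) \<and>
          prime \<bar>lucasV P 1 (Suc m' - 1)\<bar> \<and> prime \<bar>lucasV P 1 (Suc m' + 1)\<bar>"
          using fin[OF pq(1,2,4)] by blast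
        then show ?thesis by (intro exI[of _ "Suc m'"]) simp
      qed
    qed
  qed
qed



lemma neg_prod: "even (a+b) \<Longrightarrow> lucasV (-P) Q a * lucasV (-P) Q b = lucasV P Q a * lucasV P Q b"
proof -
  assume "even (a+b)"
  then have "(-1::int)^a * (-1)^b = 1" by (simp add: power_add[symmetric])
  then show ?thesis unfolding lucasV_neg
    by (metis (no_types, lifting) mult.assoc mult.commute mult.left_neutral)
qed

lemma neg_abs: "\<bar>lucasV (-P) Q a\<bar> = \<bar>lucasV P Q a\<bar>"
  unfolding lucasV_neg by (simp add: abs_mult)

theorem theorem1p2:
  fixes P A B :: int and n :: nat
  assumes npos: "n > 0"
    and eq: "int (sigma 2 n) - int n ^ 2 = A * int n + B"
    and big: "int n > (\<bar>A\<bar> + \<bar>B\<bar>) ^ 3"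
  shows
    "(squarefree (P^2 + 4) \<and> A = P^2 + 2 \<and> B = -(P^4) - 4 * P^2 + 1 \<longrightarrow>
       (\<exists>k::nat. int n = lucasV P (-1) (2*k) * lucasV P (-1) (2*k+2) \<and>
          prime \<bar>lucasV P (-1) (2*k)\<bar> \<and> prime \<bar>lucasV P (-1) (2*k+2)\<bar>))
   \<and> (squarefree (P^2 + 4) \<and> A = P^2 + 2 \<and> B = P^4 + 4 * P^2 + 1 \<longrightarrow>
       (\<exists>k::nat. k \<ge> 1 \<and> int n = lucasV P (-1) (2*k-1) * lucasV P (-1) (2*k+1) \<and>
          prime \<bar>lucasV P (-1) (2*k-1)\<bar> \<and> prime \<bar>lucasV P (-1) (2*k+1)\<bar>))
   \<and> (squarefree (P^2 - 4) \<and> A = P^2 - 2 \<and> B = -(P^4) + 4 * P^2 + 1 \<longrightarrow>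
       (\<exists>k::nat. k \<ge> 1 \<and> int n = lucasV P 1 (k-1) * lucasV P 1 (k+1) \<and>
          prime \<bar>lucasV P 1 (k-1)\<bar> \<and> prime \<bar>lucasV P 1 (k+1)\<bar>))"
proof -
  consider (pos) "P \<ge> 1" | (zero) "P = 0" | (neg) "-P \<ge> 1" by linarith
  then show ?thesis
  proof cases
    case pos
    show ?thesis
      using case1[OF pos npos eq big] case2[OF pos npos eq big] case3[OF pos npos eq big] by blast
  next
    case zero
    have "\<not> squarefree (4::int)" by (rule not_squarefreeI[of 2]) auto
    then show ?thesis using zero by simp
  next
    case neg
    define P' where "P' = -P"
    have P': "P' \<ge> 1" using neg P'_def by simp
    have sq2: "P'^2 = P^2" and sq4: "P'^4 = P^4" unfolding P'_def by simp_all
    have PP: "P = -P'" using P'_def by simp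
    show ?thesis
    proof (intro conjI impI)
      assume h: "squarefree (P^2 + 4) \<and> A = P^2 + 2 \<and> B = -(P^4) - 4 * P^2 + 1"
      obtain k where k: "int n = lucasV P' (-1) (2*k) * lucasV P' (-1) (2*k+2)"
          "prime \<bar>lucasV P' (-1) (2*k)\<bar>" "prime \<bar>lucasV P' (-1) (2*k+2)\<bar>"
        using case1[OF P' npos eq big] h sq2 sq4 by auto
      have "int n = lucasV P (-1) (2*k) * lucasV P (-1) (2*k+2)"
        unfolding PP using k(1) neg_prod[of "2*k" "2*k+2" P' "-1"] by simp
      then show "\<exists>k::nat. int n = lucasV P (-1) (2*k) * lucasV P (-1) (2*k+2) \<and>
          prime \<bar>lucasV P (-1) (2*k)\<bar> \<and> prime \<bar>lucasV P (-1) (2*k+2)\<bar>"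
        using k(2,3) unfolding PP neg_abs by blast
    next
      assume h: "squarefree (P^2 + 4) \<and> A = P^2 + 2 \<and> B = P^4 + 4 * P^2 + 1"
      obtain k where k: "k \<ge> 1" "int n = lucasV P' (-1) (2*k-1) * lucasV P' (-1) (2*k+1)"
          "prime \<bar>lucasV P' (-1) (2*k-1)\<bar>" "prime \<bar>lucasV P' (-1) (2*k+1)\<bar>"
        using case2[OF P' npos eq big] h sq2 sq4 by auto
      have "even ((2*k-1) + (2*k+1))" using k(1) by simp
      then have "int n = lucasV P (-1) (2*k-1) * lucasV P (-1) (2*k+1)"
        unfolding PP using k(2) neg_prod[of "2*k-1" "2*k+1" P' "-1"] by simp
      then show "\<exists>k::nat. k \<ge> 1 \<and> int n = lucasV P (-1) (2*k-1) * lucasV P (-1) (2*k+1) \<and>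
          prime \<bar>lucasV P (-1) (2*k-1)\<bar> \<and> prime \<bar>lucasV P (-1) (2*k+1)\<bar>"
        using k(1,3,4) unfolding PP neg_abs by blast
    next
      assume h: "squarefree (P^2 - 4) \<and> A = P^2 - 2 \<and> B = -(P^4) + 4 * P^2 + 1"
      obtain k where k: "k \<ge> 1" "int n = lucasV P' 1 (k-1) * lucasV P' 1 (k+1)"
          "prime \<bar>lucasV P' 1 (k-1)\<bar>" "prime \<bar>lucasV P' 1 (k+1)\<bar>"
        using case3[OF P' npos eq big] h sq2 sq4 by auto
      have "even ((k-1) + (k+1))" using k(1) by simp
      then have "int n = lucasV P 1 (k-1) * lucasV P 1 (k+1)"
        unfolding PP using k(2) neg_prod[of "k-1" "k+1" P' 1] by simp
      then show "\<exists>k::nat. k \<ge> 1 \<and> int n = lucasV P 1 (k-1) * lucasV P 1 (k+1) \<and>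
          prime \<bar>lucasV P 1 (k-1)\<bar> \<and> prime \<bar>lucasV P 1 (k+1)\<bar>"
        using k(1,3,4) unfolding PP neg_abs by blast
    qed
  qed
qed

end
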